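(* Let $H\in\mathbb{C}^{n\times n}$ be PT-symmetric, i.e., suppose there exists a matrix $P\in\mathbb{C}^{n\times n}$ with $P^{2}=I$ such that $P\bar H - HP = 0$. Then $H$ is pseudo-Hermitian. No diagonalizability assumption on $H$ is required.
   Context: For a matrix $M$, $\bar M$ denotes the entrywise complex conjugate and $M^{\dagger}$ its conjugate transpose; $I$ is the $n\times n$ identity. A matrix $H\in\mathbb{C}^{n\times n}$ is called PT-symmetric if it commutes with $PT$, where $P$ is a linear operator (matrix) with $P^2=I$ and $T$ is complex conjugation; in matrix form this is $P\bar H - HP = 0$. A matrix $H$ is called pseudo-Hermitian if there exists a non-singular Hermitian matrix $G\in\mathbb{C}^{n\times n}$ such that $H^{\dagger}G - GH = 0$. *)

theory Defs
  imports "HOL-Analysis.Analysis"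
begin

text \<open>n x n complex matrices are represented as complex^'n^'n (n = CARD('n)).\<close>

definition mconj :: "complex^'n^'m \<Rightarrow> complex^'n^'m" where
  "mconj M = (\<chi> i j. cnj (M $ i $ j))"

definition adjoint_mat :: "complex^'n^'m \<Rightarrow> complex^'m^'n" where
  "adjoint_mat M = (\<chi> i j. cnj (M $ j $ i))"

definition hermitian_mat :: "complex^'n^'n \<Rightarrow> bool" where
  "hermitian_mat G \<longleftrightarrow> adjoint_mat G = G"

definition PT_symmetric :: "complex^'n^'n \<Rightarrow> bool" where
  "PT_symmetric H \<longleftrightarrow> (\<exists>P::complex^'n^'n. P ** P = mat 1 \<and> P ** mconj H - H ** P = 0)"

definition pseudo_hermitian :: "complex^'n^'n \<Rightarrow> bool" where
  "pseudo_hermitian H \<longleftrightarrow> (\<exists>G::complex^'n^'n. invertible G \<and> hermitian_mat G \<and>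
      adjoint_mat H ** G - G ** H = 0)"

end

theory Submission imports Defs "Jordan_Normal_Form.Jordan_Normal_Form_Existence" begin
no_notation Matrix.vec_index (infixl "$" 100)

definition revm :: "nat \<Rightarrow> complex mat" where
  "revm n = Matrix.mat n n (\<lambda>(i,j). if i + j + 1 = n then 1 else 0)"

lemma revm_carrier[simp]: "revm n \<in> carrier_mat n n" by (simp add: revm_def)

lemma revm_mult: assumes B: "B \<in> carrier_mat n m"
  shows "revm n * B = Matrix.mat n m (\<lambda>(i,j). B $$ (n - 1 - i, j))"
proof (rule eq_matI)
  fix i j assume i: "i < dim_row (Matrix.mat n m (\<lambda>(i,j). B $$ (n - 1 - i, j)))"
    and j: "j < dim_col (Matrix.mat n m (\<lambda>(i,j). B $$ (n - 1 - i, j)))"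
  hence i: "i < n" and j: "j < m" by auto
  have "(revm n * B) $$ (i,j) = (\<Sum>k\<in>{0..<n}. (if i + k + 1 = n then 1 else 0) * B $$ (k,j))"
    using i j B by (simp add: revm_def scalar_prod_def)
  also have "\<dots> = (\<Sum>k\<in>{0..<n}. if k = n - 1 - i then B $$ (k,j) else 0)"
  proof (rule sum.cong[OF refl])
    fix k have "(i + k + 1 = n) = (k = n - 1 - i)" using i by arith
    thus "(if i + k + 1 = n then 1 else 0) * B $$ (k,j) = (if k = n - 1 - i then B $$ (k,j) else 0)" by simp
  qed
  also have "\<dots> = B $$ (n - 1 - i, j)" using i by simp
  finally show "(revm n * B) $$ (i,j) = Matrix.mat n m (\<lambda>(i,j). B $$ (n - 1 - i, j)) $$ (i,j)"
    using i j by simp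
qed (insert B, auto simp: revm_def)

lemma mult_revm: assumes B: "B \<in> carrier_mat m n"
  shows "B * revm n = Matrix.mat m n (\<lambda>(i,j). B $$ (i, n - 1 - j))"
proof (rule eq_matI)
  fix i j assume i: "i < dim_row (Matrix.mat m n (\<lambda>(i,j). B $$ (i, n - 1 - j)))"
    and j: "j < dim_col (Matrix.mat m n (\<lambda>(i,j). B $$ (i, n - 1 - j)))"
  hence i: "i < m" and j: "j < n" by auto
  have "(B * revm n) $$ (i,j) = (\<Sum>k\<in>{0..<n}. B $$ (i,k) * (if k + j + 1 = n then 1 else 0))"
    using i j B by (simp add: revm_def scalar_prod_def)
  also have "\<dots> = (\<Sum>k\<in>{0..<n}. if k = n - 1 - j then B $$ (i,k) else 0)"
  proof (rule sum.cong[OF refl])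
    fix k have "(k + j + 1 = n) = (k = n - 1 - j)" using j by arith
    thus "B $$ (i,k) * (if k + j + 1 = n then 1 else 0) = (if k = n - 1 - j then B $$ (i,k) else 0)" by simp
  qed
  also have "\<dots> = B $$ (i, n - 1 - j)" using j by simp
  finally show "(B * revm n) $$ (i,j) = Matrix.mat m n (\<lambda>(i,j). B $$ (i, n - 1 - j)) $$ (i,j)"
    using i j by simp
qed (insert B, auto simp: revm_def)

lemma revm_revm: "revm n * revm n = 1\<^sub>m n"
  by (subst revm_mult[of _ n n], simp, rule eq_matI, auto simp: revm_def)

lemma jordan_block_transpose: "transpose_mat (jordan_block n a) = revm n * jordan_block n a * revm n"
  apply (subst revm_mult[of _ n n], simp)
  apply (subst mult_revm[of _ n n], simp)
  apply (rule eq_matI, auto)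
  done

lemma similar_transpose: fixes A :: "complex mat" assumes "similar_mat A B" shows "similar_mat (transpose_mat A) (transpose_mat B)"
proof -
  from similar_matD[OF assms] obtain n P Q where c: "{A,B,P,Q} \<subseteq> carrier_mat n n"
    and PQ: "P * Q = 1\<^sub>m n" and QP: "Q * P = 1\<^sub>m n" and A: "A = P * B * Q" by auto
  show ?thesis
  proof (rule similar_matI[where n=n and P="transpose_mat Q" and Q="transpose_mat P"])
    show "{transpose_mat A, transpose_mat B, transpose_mat Q, transpose_mat P} \<subseteq> carrier_mat n n"
      using c by auto
    have P: "P \<in> carrier_mat n n" and Q: "Q \<in> carrier_mat n n" using c by auto
    show "transpose_mat Q * transpose_mat P = 1\<^sub>m n"
      using transpose_mult[OF P Q] PQ by simp
    show "transpose_mat P * transpose_mat Q = 1\<^sub>m n"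
      using transpose_mult[OF Q P] QP by simp
    show "transpose_mat A = transpose_mat Q * transpose_mat B * transpose_mat P"
    proof -
      have P: "P \<in> carrier_mat n n" and B: "B \<in> carrier_mat n n" and Q: "Q \<in> carrier_mat n n" using c by auto
      have PB: "P * B \<in> carrier_mat n n" using P B by simp
      have "transpose_mat A = transpose_mat Q * transpose_mat (P * B)"
        unfolding A by (rule transpose_mult[OF PB Q])
      also have "transpose_mat (P * B) = transpose_mat B * transpose_mat P" by (rule transpose_mult[OF P B])
      also have "transpose_mat Q * (transpose_mat B * transpose_mat P) = transpose_mat Q * transpose_mat B * transpose_mat P"
        by (rule assoc_mult_mat[symmetric, of _ n n _ n _ n], insert P B Q, auto)
      finally show ?thesis .
    qed
  qed
qed

lemma transpose_diag_block_mat: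
  "transpose_mat (diag_block_mat As) = diag_block_mat (map transpose_mat As)"
proof (induct As)
  case Nil then show ?case by simp
next
  case (Cons A As)
  let ?D = "diag_block_mat As"
  have "transpose_mat (diag_block_mat (A # As)) =
     transpose_mat (four_block_mat A (0\<^sub>m (dim_row A) (dim_col ?D)) (0\<^sub>m (dim_row ?D) (dim_col A)) ?D)"
    by (simp add: Let_def)
  also have "\<dots> = four_block_mat (transpose_mat A) (0\<^sub>m (dim_col A) (dim_row ?D))
      (0\<^sub>m (dim_col ?D) (dim_row A)) (transpose_mat ?D)"
    by (subst transpose_four_block_mat[of _ "dim_row A" "dim_col A" _ "dim_col ?D" _ "dim_row ?D"], auto)
  also have "\<dots> = diag_block_mat (map transpose_mat (A # As))"
    by (simp add: Let_def Cons[symmetric])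
  finally show ?case .
qed

lemma jordan_matrix_transpose: fixes n_as :: "(nat \<times> complex) list" shows "similar_mat (transpose_mat (jordan_matrix n_as)) (jordan_matrix n_as)"
proof -
  let ?Ms = "map (\<lambda>(n,a). (transpose_mat (jordan_block n a), jordan_block n a)) n_as"
  have sim: "similar_mat (diag_block_mat (map fst ?Ms)) (diag_block_mat (map snd ?Ms))"
  proof (rule similar_diag_mat_block_mat)
    fix A B assume "(A,B) \<in> set ?Ms"
    then obtain n a where A: "A = transpose_mat (jordan_block n a)" and B: "B = jordan_block n a" by auto
    have c: "revm n * jordan_block n a * revm n \<in> carrier_mat n n"
      by (metis mult_carrier_mat revm_carrier jordan_block_carrier)
    show "similar_mat A B" unfolding A B jordan_block_transpose
      by (rule similar_matI[where n=n and P="revm n" and Q="revm n"], insert c, auto simp: revm_revm)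
  qed
  have e1: "map fst ?Ms = map transpose_mat (map (\<lambda>(n,a). jordan_block n a) n_as)" by (induct n_as) auto
  have e2: "map snd ?Ms = map (\<lambda>(n,a). jordan_block n a) n_as" by (induct n_as) auto
  show ?thesis using sim unfolding jordan_matrix_def transpose_diag_block_mat e1 e2 .
qed

lemma transpose_similar: fixes A :: "complex mat" assumes A: "A \<in> carrier_mat n n"
  shows "similar_mat (transpose_mat A) A"
proof -
  from char_poly_factorized[OF A] obtain as where "char_poly A = (\<Prod> a \<leftarrow> as. [:- a, 1:])" by auto
  from jordan_nf_exists[OF A this] obtain n_as where "jordan_nf A n_as" ..
  hence s: "similar_mat A (jordan_matrix n_as)" unfolding jordan_nf_def by auto
  show ?thesis
    by (rule similar_mat_trans[OF similar_mat_trans[OF similar_transpose[OF s] jordan_matrix_transpose]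
      similar_mat_sym[OF s]])
qed


lemma inverse_from_det: fixes X :: "complex mat"
  assumes X: "X \<in> carrier_mat n n" and d: "det X \<noteq> 0"
  shows "\<exists>K. K \<in> carrier_mat n n \<and> X * K = 1\<^sub>m n \<and> K * X = 1\<^sub>m n"
proof (intro exI conjI)
  let ?K = "(1 / det X) \<cdot>\<^sub>m adj_mat X"
  have a: "adj_mat X \<in> carrier_mat n n" using adj_mat(1)[OF X] .
  show "?K \<in> carrier_mat n n" using a by simp
  have e: "(1 / det X) \<cdot>\<^sub>m (det X \<cdot>\<^sub>m 1\<^sub>m n) = 1\<^sub>m n"
    by (rule eq_matI, insert d, auto)
  show "X * ?K = 1\<^sub>m n"
    using mult_smult_distrib[OF X a] adj_mat(2)[OF X] e by simp
  show "?K * X = 1\<^sub>m n"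
    using mult_smult_assoc_mat[OF a X] adj_mat(3)[OF X] e by simp
qed

lemma good_c: fixes N :: "complex mat" assumes N: "N \<in> carrier_mat n n"
  shows "\<exists>c K. cmod c = 1 \<and> K \<in> carrier_mat n n \<and>
     (N + (c^2) \<cdot>\<^sub>m 1\<^sub>m n) * K = 1\<^sub>m n \<and> K * (N + (c^2) \<cdot>\<^sub>m 1\<^sub>m n) = 1\<^sub>m n"
proof -
  let ?p = "pcompose (char_poly N) [:0,0,-1:]"
  have cp: "char_poly N \<noteq> 0" using degree_monic_char_poly[OF N] by auto
  have "?p \<noteq> 0" using pcompose_eq_0[of "char_poly N" "[:0,0,-1:]"] cp by auto
  hence fin: "finite {c. poly ?p c = 0}" by (rule poly_roots_finite)
  hence "finite (Re ` {c. poly ?p c = 0})" by simp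
  moreover have "infinite {-1..(1::real)}" by simp
  ultimately obtain x where x: "x \<in> {-1..(1::real)}" "x \<notin> Re ` {c. poly ?p c = 0}"
    by (metis finite_subset subsetI)
  define c where "c = Complex x (sqrt (1 - x^2))"
  have "x^2 \<le> 1" using x(1) by (simp add: abs_square_le_1 abs_le_iff)
  hence cm: "cmod c = 1" unfolding c_def cmod_def by simp
  have "poly ?p c \<noteq> 0" using x(2) unfolding c_def by force
  hence "poly (char_poly N) (- (c^2)) \<noteq> 0" by (simp add: poly_pcompose power2_eq_square)
  hence "\<not> eigenvalue N (- (c^2))" using eigenvalue_root_char_poly[OF N] by simp
  hence "det (char_matrix N (- (c^2))) \<noteq> 0" using eigenvalue_det[OF N] by simp
  moreover have "char_matrix N (- (c^2)) = N + (c^2) \<cdot>\<^sub>m 1\<^sub>m n"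
    unfolding char_matrix_def using N by simp
  ultimately have "det (N + (c^2) \<cdot>\<^sub>m 1\<^sub>m n) \<noteq> 0" by simp
  from inverse_from_det[OF _ this] N cm show ?thesis by auto
qed

lemma cvec_eqI: "(\<And>i. x $ i = y $ i) \<Longrightarrow> x = y"
  by (simp add: Finite_Cartesian_Product.vec_eq_iff)

definition sm :: "complex \<Rightarrow> complex^'n^'m \<Rightarrow> complex^'n^'m" where
  "sm c M = (\<chi> i j. c * M $ i $ j)"

lemma sm_mult_left: "sm c A ** B = sm c (A ** B)"
  by (simp add: Finite_Cartesian_Product.vec_eq_iff sm_def matrix_matrix_mult_def sum_distrib_left mult.assoc)
lemma sm_mult_right: "A ** sm c B = sm c (A ** B)"
  by (simp add: Finite_Cartesian_Product.vec_eq_iff sm_def matrix_matrix_mult_def sum_distrib_left ac_simps)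
lemma sm_sm: "sm c (sm d A) = sm (c * d) A"
  by (simp add: Finite_Cartesian_Product.vec_eq_iff sm_def mult.assoc)
lemma sm_one: "sm 1 A = A"
  by (simp add: Finite_Cartesian_Product.vec_eq_iff sm_def)
lemma sm_add: "sm c (A + B) = sm c A + sm c B"
  by (intro cvec_eqI) (simp add: sm_def distrib_left)
lemma mult_add_left: "(A + B) ** (C::complex^'n^'m) = A ** C + B ** C"
  by (intro cvec_eqI) (simp add: matrix_matrix_mult_def distrib_right sum.distrib)
lemma mult_add_right: "(C::complex^'n^'m) ** (A + B) = C ** A + C ** B"
  by (intro cvec_eqI) (simp add: matrix_matrix_mult_def distrib_left sum.distrib)
lemma sm_mat1: "A ** sm c (Finite_Cartesian_Product.mat 1) = sm c (A::complex^'n^'m)"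
  by (simp add: sm_mult_right matrix_mul_rid)

lemma adjoint_mult: "adjoint_mat (A ** B) = adjoint_mat (B::complex^'n^'m) ** adjoint_mat (A::complex^'m^'k)"
  by (simp add: Finite_Cartesian_Product.vec_eq_iff adjoint_mat_def matrix_matrix_mult_def cnj_sum mult.commute)
lemma adjoint_adjoint: "adjoint_mat (adjoint_mat A) = A"
  by (simp add: Finite_Cartesian_Product.vec_eq_iff adjoint_mat_def)
lemma adjoint_add: "adjoint_mat (A + B) = adjoint_mat A + adjoint_mat B"
  by (intro cvec_eqI) (simp add: adjoint_mat_def)
lemma adjoint_sm: "adjoint_mat (sm c A) = sm (cnj c) (adjoint_mat A)"
  by (simp add: Finite_Cartesian_Product.vec_eq_iff adjoint_mat_def sm_def)
lemma adjoint_transpose: "adjoint_mat A = transpose (mconj A)"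
  by (simp add: Finite_Cartesian_Product.vec_eq_iff adjoint_mat_def mconj_def transpose_def)

definition tm :: "(nat \<Rightarrow> 'n::finite) \<Rightarrow> complex^'n^'n \<Rightarrow> complex mat" where
  "tm f M = Matrix.mat CARD('n) CARD('n) (\<lambda>(i,j). M $ f i $ f j)"

definition om :: "(nat \<Rightarrow> 'n::finite) \<Rightarrow> complex mat \<Rightarrow> complex^'n^'n" where
  "om f A = (\<chi> i j. A $$ (inv_into {0..<CARD('n)} f i, inv_into {0..<CARD('n)} f j))"

lemma tm_carrier[simp]: "tm f (M::complex^'n^'n) \<in> carrier_mat CARD('n) CARD('n)"
  by (simp add: tm_def)
lemma tm_dim[simp]: "dim_row (tm f (M::complex^'n^'n)) = CARD('n)" "dim_col (tm f (M::complex^'n^'n)) = CARD('n)"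
  by (simp_all add: tm_def)

lemma tm_index[simp]: "i < CARD('n) \<Longrightarrow> j < CARD('n) \<Longrightarrow> tm f (M::complex^'n^'n) $$ (i,j) = M $ f i $ f j"
  by (simp add: tm_def)

context fixes f :: "nat \<Rightarrow> 'n::finite"
  assumes bf: "bij_betw f {0..<CARD('n)} (UNIV :: 'n set)"
begin

lemma g_lt: "inv_into {0..<CARD('n)} f a < CARD('n)"
  using bf by (metis atLeastLessThan_iff bij_betw_def inv_into_into iso_tuple_UNIV_I)
lemma f_g: "f (inv_into {0..<CARD('n)} f a) = a"
  using bf by (meson bij_betw_inv_into_right iso_tuple_UNIV_I)
lemma g_f: "k < CARD('n) \<Longrightarrow> inv_into {0..<CARD('n)} f (f k) = k"
  using bf by (simp add: bij_betw_def inv_into_f_f)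

lemma tm_inj: assumes "tm f A = tm f B" shows "A = B"
proof -
  { fix a b
    have "A $ a $ b = tm f A $$ (inv_into {0..<CARD('n)} f a, inv_into {0..<CARD('n)} f b)"
      using g_lt f_g by simp
    also have "\<dots> = B $ a $ b" using assms g_lt f_g by simp
    finally have "A $ a $ b = B $ a $ b" . }
  thus ?thesis by (intro cvec_eqI) simp
qed

lemma tm_om: assumes "A \<in> carrier_mat CARD('n) CARD('n)" shows "tm f (om f A) = A"
  by (rule eq_matI, insert assms, auto simp: om_def g_f)

lemma tm_mult: "tm f (A ** B) = tm f A * tm f B"
proof (rule eq_matI)
  fix i j assume "i < dim_row (tm f A * tm f B)" "j < dim_col (tm f A * tm f B)"
  hence i: "i < CARD('n)" and j: "j < CARD('n)" by auto
  have "(tm f A * tm f B) $$ (i,j) = (\<Sum>k\<in>{0..<CARD('n)}. A $ f i $ f k * B $ f k $ f j)"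
    using i j by (simp add: scalar_prod_def)
  also have "\<dots> = (\<Sum>k\<in>UNIV. A $ f i $ k * B $ k $ f j)"
    by (rule sum.reindex_bij_betw[OF bf])
  also have "\<dots> = tm f (A ** B) $$ (i,j)" using i j by (simp add: matrix_matrix_mult_def)
  finally show "tm f (A ** B) $$ (i,j) = (tm f A * tm f B) $$ (i,j)" by simp
qed auto

lemma tm_one: "tm f (Finite_Cartesian_Product.mat 1) = 1\<^sub>m CARD('n)"
proof (rule eq_matI)
  fix i j assume "i < dim_row (1\<^sub>m CARD('n))" "j < dim_col (1\<^sub>m CARD('n) :: complex mat)"
  hence i: "i < CARD('n)" and j: "j < CARD('n)" by auto
  have "(f i = f j) = (i = j)" using bf i j unfolding bij_betw_def inj_on_def by auto
  thus "tm f (Finite_Cartesian_Product.mat 1) $$ (i, j) = 1\<^sub>m CARD('n) $$ (i, j)"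
    using i j by (simp add: Finite_Cartesian_Product.mat_def)
qed auto

lemma tm_add: "tm f (A + B) = tm f A + tm f B"
  by (rule eq_matI, auto)

lemma tm_sm: "tm f (sm c A) = c \<cdot>\<^sub>m tm f A"
  by (rule eq_matI, auto simp: sm_def)

lemma tm_transpose: "tm f (transpose A) = transpose_mat (tm f A)"
  by (rule eq_matI, auto simp: transpose_def)

end

lemma bij_exists: "\<exists>f::nat \<Rightarrow> 'n::finite. bij_betw f {0..<CARD('n)} (UNIV :: 'n set)"
  using ex_bij_betw_nat_finite[of "UNIV :: 'n set"] by simp


lemma transpose_sim_vec: fixes H :: "complex^'n^'n"
  shows "\<exists>Q1 Q2 :: complex^'n^'n. transpose H = Q1 ** H ** Q2 \<and>
     Q1 ** Q2 = Finite_Cartesian_Product.mat 1 \<and> Q2 ** Q1 = Finite_Cartesian_Product.mat 1"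
proof -
  obtain f :: "nat \<Rightarrow> 'n" where bf: "bij_betw f {0..<CARD('n)} UNIV" using bij_exists by blast
  let ?A = "tm f H"
  from similar_matD[OF transpose_similar[OF tm_carrier]] obtain m P Q where
    c: "{transpose_mat ?A, ?A, P, Q} \<subseteq> carrier_mat m m" and PQ: "P * Q = 1\<^sub>m m" and QP: "Q * P = 1\<^sub>m m"
    and e: "transpose_mat ?A = P * ?A * Q" by blast
  have m: "m = CARD('n)" using c by auto
  have P: "P \<in> carrier_mat CARD('n) CARD('n)" and Q: "Q \<in> carrier_mat CARD('n) CARD('n)" using c m by auto
  show ?thesis
  proof (intro exI conjI)
    show "transpose H = om f P ** H ** om f Q"
      by (rule tm_inj[OF bf], simp add: tm_transpose[OF bf] tm_mult[OF bf] tm_om[OF bf P] tm_om[OF bf Q] e)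
    show "om f P ** om f Q = Finite_Cartesian_Product.mat 1"
      by (rule tm_inj[OF bf], simp add: tm_one[OF bf] tm_mult[OF bf] tm_om[OF bf P] tm_om[OF bf Q] PQ m)
    show "om f Q ** om f P = Finite_Cartesian_Product.mat 1"
      by (rule tm_inj[OF bf], simp add: tm_one[OF bf] tm_mult[OF bf] tm_om[OF bf P] tm_om[OF bf Q] QP m)
  qed
qed

lemma good_c_vec: fixes M :: "complex^'n^'n"
  shows "\<exists>c K. cmod c = 1 \<and> (M + sm (c^2) (Finite_Cartesian_Product.mat 1)) ** K = Finite_Cartesian_Product.mat 1
     \<and> K ** (M + sm (c^2) (Finite_Cartesian_Product.mat 1)) = Finite_Cartesian_Product.mat 1"
proof -
  obtain f :: "nat \<Rightarrow> 'n" where bf: "bij_betw f {0..<CARD('n)} UNIV" using bij_exists by blast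
  from good_c[OF tm_carrier[of f M]] obtain c K where cm: "cmod c = 1" and K: "K \<in> carrier_mat CARD('n) CARD('n)"
    and i1: "(tm f M + c\<^sup>2 \<cdot>\<^sub>m 1\<^sub>m CARD('n)) * K = 1\<^sub>m CARD('n)"
    and i2: "K * (tm f M + c\<^sup>2 \<cdot>\<^sub>m 1\<^sub>m CARD('n)) = 1\<^sub>m CARD('n)" by blast
  show ?thesis
  proof (intro exI conjI)
    show "cmod c = 1" by fact
    show "(M + sm (c^2) (Finite_Cartesian_Product.mat 1)) ** om f K = Finite_Cartesian_Product.mat 1"
      by (rule tm_inj[OF bf], simp add: tm_one[OF bf] tm_mult[OF bf] tm_add[OF bf] tm_sm[OF bf] tm_om[OF bf K] i1)
    show "om f K ** (M + sm (c^2) (Finite_Cartesian_Product.mat 1)) = Finite_Cartesian_Product.mat 1"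
      by (rule tm_inj[OF bf], simp add: tm_one[OF bf] tm_mult[OF bf] tm_add[OF bf] tm_sm[OF bf] tm_om[OF bf K] i2)
  qed
qed


abbreviation I1 :: "complex^'n^'n" where "I1 \<equiv> Finite_Cartesian_Product.mat 1"

lemma transpose_I1: "transpose (I1 :: complex^'n^'n) = I1"
  by (intro cvec_eqI) (simp add: transpose_def Finite_Cartesian_Product.mat_def)

lemmas massoc = matrix_mul_assoc[symmetric]

theorem theorem3:
  fixes H :: "complex^'n^'n"
  assumes "PT_symmetric H"
  shows "pseudo_hermitian H"
proof -
  from assms obtain P :: "complex^'n^'n" where PP: "P ** P = I1" and PH0: "P ** mconj H - H ** P = 0"
    unfolding PT_symmetric_def by blast
  from PH0 have PH: "P ** mconj H = H ** P" by simp
  have cH: "mconj H = P ** (H ** P)"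
  proof -
    have "mconj H = (P ** P) ** mconj H" by (simp add: PP)
    also have "\<dots> = P ** (P ** mconj H)" by (simp add: massoc)
    also have "\<dots> = P ** (H ** P)" by (simp add: PH)
    finally show ?thesis .
  qed
  define T where "T = transpose P"
  have TT: "T ** T = I1" unfolding T_def
    by (simp add: matrix_transpose_mul[symmetric] PP transpose_I1)
  have TTX: "T ** (T ** X) = X" for X :: "complex^'n^'n" by (simp add: matrix_mul_assoc TT)
  obtain Q1 Q2 :: "complex^'n^'n" where tH: "transpose H = Q1 ** H ** Q2"
    and Q12: "Q1 ** Q2 = I1" and Q21: "Q2 ** Q1 = I1" using transpose_sim_vec by blast
  have Q12X: "Q1 ** (Q2 ** X) = X" for X :: "complex^'n^'n" by (simp add: matrix_mul_assoc Q12)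
  have Q21X: "Q2 ** (Q1 ** X) = X" for X :: "complex^'n^'n" by (simp add: matrix_mul_assoc Q21)
  have aH: "adjoint_mat H = T ** (Q1 ** (H ** (Q2 ** T)))"
    unfolding adjoint_transpose cH T_def by (simp add: matrix_transpose_mul tH massoc)
  define S where "S = T ** Q1"
  define Si where "Si = Q2 ** T"
  have SSi: "S ** Si = I1" unfolding S_def Si_def by (simp add: massoc Q12X TT)
  have SiS: "Si ** S = I1" unfolding S_def Si_def by (simp add: massoc TTX Q21)
  have HS: "adjoint_mat H ** S = S ** H" unfolding aH S_def by (simp add: massoc TTX Q21)
  have HS2: "adjoint_mat S ** H = adjoint_mat H ** adjoint_mat S"
    using arg_cong[OF HS, of adjoint_mat] by (simp add: adjoint_mult adjoint_adjoint)
  obtain c K where cm: "cmod c = 1"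
    and K1: "(Si ** adjoint_mat S + sm (c^2) I1) ** K = I1"
    and K2: "K ** (Si ** adjoint_mat S + sm (c^2) I1) = I1"
    using good_c_vec[of "Si ** adjoint_mat S"] by blast
  define X where "X = Si ** adjoint_mat S + sm (c^2) I1"
  have cc: "cnj c * c = 1" using complex_norm_square[of c] cm by (simp add: mult.commute)
  have cc2: "c * cnj c = 1" using cc by (simp add: mult.commute)
  define G where "G = sm c S + sm (cnj c) (adjoint_mat S)"
  define Gi where "Gi = sm c (K ** Si)"
  have SX: "S ** X = adjoint_mat S + sm (c^2) S"
  proof -
    have 1: "S ** (Si ** adjoint_mat S) = adjoint_mat S" by (simp add: matrix_mul_assoc SSi)
    have 2: "S ** sm (c^2) I1 = sm (c^2) S" by (simp add: sm_mult_right)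
    show ?thesis unfolding X_def mult_add_right 1 2 ..
  qed
  have GX: "G = sm (cnj c) (S ** X)"
  proof -
    have "cnj c * c\<^sup>2 = c" using cc by (simp add: power2_eq_square mult.assoc[symmetric])
    thus ?thesis unfolding SX G_def by (simp add: sm_add sm_sm add.commute)
  qed
  have sI: "sm (c * cnj c) (I1::complex^'n^'n) = I1" "sm (cnj c * c) (I1::complex^'n^'n) = I1"
    using cc cc2 sm_one by metis+
  have GGi: "G ** Gi = I1"
    unfolding GX Gi_def
    by (simp add: sm_mult_left sm_mult_right sm_sm cc massoc)
       (simp add: matrix_mul_assoc K1[folded X_def] SSi[folded massoc] sm_one cc cc2 sI)
  have GiG: "Gi ** G = I1"
    unfolding GX Gi_def
    by (simp add: sm_mult_left sm_mult_right sm_sm cc2 massoc)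
       (simp add: matrix_mul_assoc K2[folded X_def] SiS sm_one cc cc2 sI)
  have herm: "hermitian_mat G"
    unfolding hermitian_mat_def G_def by (simp add: adjoint_add adjoint_sm adjoint_adjoint add.commute)
  have inter: "adjoint_mat H ** G = G ** H"
    unfolding G_def by (simp add: mult_add_right mult_add_left sm_mult_left sm_mult_right HS HS2)
  show ?thesis unfolding pseudo_hermitian_def invertible_def
    using GGi GiG herm inter by auto
qed

end
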